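(* Let $\Sigma$ be an alphabet and $(C_1,\dots,C_K)$ a graph-induced covering of the full shift $\Sigma^{\mathbb Z}$. Then: (A) it is a memory covering if and only if every graph presentation of it is complete; (B) if it is a memory covering and non-redundant, then every graph presentation of it is complete and deterministic; (C) it is a future covering if and only if every graph presentation of it is co-complete; (D) if it is a future covering and non-redundant, then every graph presentation of it is co-complete and co-deterministic.
   Context: $\Sigma^{\mathbb Z}$: bi-infinite sequences $\bar z=(z_k)_{k\in\mathbb Z}$, shift $\sigma(\bar z)_k=z_{k+1}$. $\bar z^-=(z_k)_{k\le-1}$, $\bar z^+=(z_k)_{k\ge0}$; $\mathrm{Pre}(A)=\{\bar z^-:\bar z\in A\}$, $\mathrm{Post}(A)=\{\bar z^+:\bar z\in A\}$; for $P$ a set of left-infinite and $F$ a set of right-infinite sequences, $P\cdot F=\{\bar z\in\Sigma^{\mathbb Z}:\bar z^-\in P,\ \bar z^+\in F\}$. A labeled graph is $\mathcal G=(S,E)$, $S$ finite, $E\subseteq S\times S\times\Sigma$, every node having an incoming and an outgoing edge. Bi-infinite walk labeled by $\bar z$: $(e_k)_{k\in\mathbb Z}$ with $e_k=(s_k,s_{k+1},z_k)\in E$, starting at $s_0$; $\mathcal Z(\mathcal G)$, $\mathcal Z(\mathcal G,s)$: labels of all bi-infinite walks / of those starting at $s$. A graph-induced covering of $Z$ is a family $(C_1,\dots,C_K)$ for which some graph $\mathcal G$ with nodes $s_1,\dots,s_K$ (a presentation) has $\mathcal Z(\mathcal G)=Z$ and $C_j=\mathcal Z(\mathcal G,s_j)$;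 non-redundant if $C_i\cap C_j=\emptyset$ for $i\ne j$. It is a memory covering if $C_j=\mathrm{Pre}(C_j)\cdot\mathrm{Post}(Z)$ for all $j$, a future covering if $C_j=\mathrm{Pre}(Z)\cdot\mathrm{Post}(C_j)$ for all $j$. A graph is complete if each node has, for each $i\in\Sigma$, at least one outgoing edge labeled $i$; deterministic if at most one; co-complete (resp. co-deterministic) if each node has, for each $i\in\Sigma$, at least (resp. at most) one incoming edge labeled $i$. *)

theory Defs
  imports Main
begin

text \<open>The past z^- = (z_k)_{k <= -1} is encoded as the nat-indexed sequence n |-> z_{-n-1};
  the future z^+ = (z_k)_{k >= 0} as n |-> z_n.\<close>

definition past :: "(int \<Rightarrow> 'a) \<Rightarrow> (nat \<Rightarrow> 'a)" where
  "past z = (\<lambda>n. z (- int n - 1))"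

definition future :: "(int \<Rightarrow> 'a) \<Rightarrow> (nat \<Rightarrow> 'a)" where
  "future z = (\<lambda>n. z (int n))"

definition Pre :: "(int \<Rightarrow> 'a) set \<Rightarrow> (nat \<Rightarrow> 'a) set" where
  "Pre A = past ` A"

definition Post :: "(int \<Rightarrow> 'a) set \<Rightarrow> (nat \<Rightarrow> 'a) set" where
  "Post A = future ` A"

definition concat_seq :: "(nat \<Rightarrow> 'a) set \<Rightarrow> (nat \<Rightarrow> 'a) set \<Rightarrow> (int \<Rightarrow> 'a) set" where
  "concat_seq P F = {z. past z \<in> P \<and> future z \<in> F}"

text \<open>Labeled graphs with node set {1..K}; an edge (s, t, i) goes from s to t with label i.\<close>

definition labeled_graph :: "nat \<Rightarrow> (nat \<times> nat \<times> 'a) set \<Rightarrow> bool" where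
  "labeled_graph K E \<longleftrightarrow> E \<subseteq> {1..K} \<times> {1..K} \<times> UNIV \<and>
     (\<forall>s\<in>{1..K}. (\<exists>t i. (s, t, i) \<in> E) \<and> (\<exists>t i. (t, s, i) \<in> E))"

definition is_walk :: "(nat \<times> nat \<times> 'a) set \<Rightarrow> (int \<Rightarrow> nat) \<Rightarrow> (int \<Rightarrow> 'a) \<Rightarrow> bool" where
  "is_walk E s z \<longleftrightarrow> (\<forall>k. (s k, s (k + 1), z k) \<in> E)"

definition Zg :: "(nat \<times> nat \<times> 'a) set \<Rightarrow> (int \<Rightarrow> 'a) set" where
  "Zg E = {z. \<exists>s. is_walk E s z}"

definition Zs :: "(nat \<times> nat \<times> 'a) set \<Rightarrow> nat \<Rightarrow> (int \<Rightarrow> 'a) set" where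
  "Zs E v = {z. \<exists>s. is_walk E s z \<and> s 0 = v}"

definition presentation ::
  "(int \<Rightarrow> 'a) set \<Rightarrow> nat \<Rightarrow> (nat \<Rightarrow> (int \<Rightarrow> 'a) set) \<Rightarrow> (nat \<times> nat \<times> 'a) set \<Rightarrow> bool" where
  "presentation Z K C E \<longleftrightarrow> labeled_graph K E \<and> Zg E = Z \<and> (\<forall>j\<in>{1..K}. C j = Zs E j)"

definition graph_induced_covering ::
  "(int \<Rightarrow> 'a) set \<Rightarrow> nat \<Rightarrow> (nat \<Rightarrow> (int \<Rightarrow> 'a) set) \<Rightarrow> bool" where
  "graph_induced_covering Z K C \<longleftrightarrow> (\<exists>E. presentation Z K C E)"

definition non_redundant :: "nat \<Rightarrow> (nat \<Rightarrow> (int \<Rightarrow> 'a) set) \<Rightarrow> bool" where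
  "non_redundant K C \<longleftrightarrow> (\<forall>i\<in>{1..K}. \<forall>j\<in>{1..K}. i \<noteq> j \<longrightarrow> C i \<inter> C j = {})"

definition memory_covering ::
  "(int \<Rightarrow> 'a) set \<Rightarrow> nat \<Rightarrow> (nat \<Rightarrow> (int \<Rightarrow> 'a) set) \<Rightarrow> bool" where
  "memory_covering Z K C \<longleftrightarrow> (\<forall>j\<in>{1..K}. C j = concat_seq (Pre (C j)) (Post Z))"

definition future_covering ::
  "(int \<Rightarrow> 'a) set \<Rightarrow> nat \<Rightarrow> (nat \<Rightarrow> (int \<Rightarrow> 'a) set) \<Rightarrow> bool" where
  "future_covering Z K C \<longleftrightarrow> (\<forall>j\<in>{1..K}. C j = concat_seq (Pre Z) (Post (C j)))"

definition complete_graph :: "nat \<Rightarrow> (nat \<times> nat \<times> 'a) set \<Rightarrow> bool" where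
  "complete_graph K E \<longleftrightarrow> (\<forall>s\<in>{1..K}. \<forall>i. \<exists>t. (s, t, i) \<in> E)"

definition deterministic_graph :: "nat \<Rightarrow> (nat \<times> nat \<times> 'a) set \<Rightarrow> bool" where
  "deterministic_graph K E \<longleftrightarrow>
     (\<forall>s\<in>{1..K}. \<forall>i t t'. (s, t, i) \<in> E \<longrightarrow> (s, t', i) \<in> E \<longrightarrow> t = t')"

definition co_complete_graph :: "nat \<Rightarrow> (nat \<times> nat \<times> 'a) set \<Rightarrow> bool" where
  "co_complete_graph K E \<longleftrightarrow> (\<forall>s\<in>{1..K}. \<forall>i. \<exists>t. (t, s, i) \<in> E)"

definition co_deterministic_graph :: "nat \<Rightarrow> (nat \<times> nat \<times> 'a) set \<Rightarrow> bool" where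
  "co_deterministic_graph K E \<longleftrightarrow>
     (\<forall>s\<in>{1..K}. \<forall>i t t'. (t, s, i) \<in> E \<longrightarrow> (t', s, i) \<in> E \<longrightarrow> t = t')"

end

theory Submission
  imports Defs
begin

definition fpath :: "(nat \<times> nat \<times> 'a) set \<Rightarrow> (nat \<Rightarrow> nat) \<Rightarrow> (nat \<Rightarrow> 'a) \<Rightarrow> bool" where
  "fpath E f l \<longleftrightarrow> (\<forall>n. (f n, f (Suc n), l n) \<in> E)"
definition bpath :: "(nat \<times> nat \<times> 'a) set \<Rightarrow> (nat \<Rightarrow> nat) \<Rightarrow> (nat \<Rightarrow> 'a) \<Rightarrow> bool" where
  "bpath E g l \<longleftrightarrow> (\<forall>n. (g (Suc n), g n, l n) \<in> E)"
definition glue_s :: "(nat \<Rightarrow> nat) \<Rightarrow> (nat \<Rightarrow> nat) \<Rightarrow> int \<Rightarrow> nat" where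
  "glue_s g f = (\<lambda>k. if k < 0 then g (nat (-k)) else f (nat k))"
definition glue_z :: "(nat \<Rightarrow> 'a) \<Rightarrow> (nat \<Rightarrow> 'a) \<Rightarrow> int \<Rightarrow> 'a" where
  "glue_z lb lf = (\<lambda>k. if k < 0 then lb (nat (-k-1)) else lf (nat k))"

lemma glue_walk:
  assumes "bpath E g lb" "fpath E f lf" "g 0 = f 0"
  shows "is_walk E (glue_s g f) (glue_z lb lf)"
  unfolding is_walk_def
proof
  fix k :: int
  consider "k < -1" | "k = -1" | "k \<ge> 0" by linarith
  then show "(glue_s g f k, glue_s g f (k + 1), glue_z lb lf k) \<in> E"
  proof cases
    case 1
    define m where "m = nat (-k-1)"
    have e1: "nat (-k) = Suc m" using 1 unfolding m_def by linarith
    have e2: "nat (-(k+1)) = m" unfolding m_def by simp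
    have "(g (Suc m), g m, lb m) \<in> E" using assms(1) unfolding bpath_def by blast
    moreover have "glue_s g f k = g (Suc m)" using 1 e1 unfolding glue_s_def by simp
    moreover have "glue_s g f (k+1) = g m" using 1 e2 unfolding glue_s_def by simp
    moreover have "glue_z lb lf k = lb m" using 1 unfolding glue_z_def m_def by simp
    ultimately show ?thesis by simp
  next
    case 2
    then show ?thesis using assms unfolding bpath_def glue_s_def glue_z_def by (simp, metis)
  next
    case 3
    have "nat (k+1) = Suc (nat k)" using 3 by linarith
    then show ?thesis using 3 assms(2) unfolding fpath_def glue_s_def glue_z_def by simp
  qed
qed

lemma glue_s0: "glue_s g f 0 = f 0" by (simp add: glue_s_def)
lemma past_glue[simp]: "past (glue_z lb lf) = lb" by (auto simp: past_def glue_z_def)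
lemma future_glue[simp]: "future (glue_z lb lf) = lf" by (auto simp: future_def glue_z_def)
lemma glue_pf: "glue_z (past z) (future z) = z"
  by (rule ext) (auto simp: past_def future_def glue_z_def)

lemma fpath_any:
  assumes "labeled_graph K E" "v \<in> {1..K}"
  shows "\<exists>f l. f 0 = v \<and> fpath E f l"
proof -
  have "\<exists>f. \<forall>n. (f n \<in> {1..K} \<and> (n = 0 \<longrightarrow> f n = v)) \<and> (\<exists>i. (f n, f (Suc n), i) \<in> E)"
  proof (rule dependent_nat_choice)
    show "\<exists>x. x \<in> {1..K} \<and> (0 = (0::nat) \<longrightarrow> x = v)" using assms by auto
  next
    fix x and n :: nat assume "x \<in> {1..K} \<and> (n = 0 \<longrightarrow> x = v)"
    then obtain t i where "(x,t,i) \<in> E" using assms(1) unfolding labeled_graph_def by blast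
    moreover then have "t \<in> {1..K}" using assms(1) unfolding labeled_graph_def by blast
    ultimately show "\<exists>y. (y \<in> {1..K} \<and> (Suc n = 0 \<longrightarrow> y = v)) \<and> (\<exists>i. (x, y, i) \<in> E)" by blast
  qed
  then obtain f where f: "\<forall>n. (f n \<in> {1..K} \<and> (n = 0 \<longrightarrow> f n = v)) \<and> (\<exists>i. (f n, f (Suc n), i) \<in> E)" by blast
  then obtain l where "\<forall>n. (f n, f (Suc n), l n) \<in> E" by metis
  then show ?thesis using f unfolding fpath_def by blast
qed

lemma bpath_any:
  assumes "labeled_graph K E" "v \<in> {1..K}"
  shows "\<exists>f l. f 0 = v \<and> bpath E f l"
proof -
  have "\<exists>f. \<forall>n. (f n \<in> {1..K} \<and> (n = 0 \<longrightarrow> f n = v)) \<and> (\<exists>i. (f (Suc n), f n, i) \<in> E)"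
  proof (rule dependent_nat_choice)
    show "\<exists>x. x \<in> {1..K} \<and> (0 = (0::nat) \<longrightarrow> x = v)" using assms by auto
  next
    fix x and n :: nat assume "x \<in> {1..K} \<and> (n = 0 \<longrightarrow> x = v)"
    then obtain t i where "(t,x,i) \<in> E" using assms(1) unfolding labeled_graph_def by blast
    moreover then have "t \<in> {1..K}" using assms(1) unfolding labeled_graph_def by blast
    ultimately show "\<exists>y. (y \<in> {1..K} \<and> (Suc n = 0 \<longrightarrow> y = v)) \<and> (\<exists>i. (y, x, i) \<in> E)" by blast
  qed
  then obtain f where f: "\<forall>n. (f n \<in> {1..K} \<and> (n = 0 \<longrightarrow> f n = v)) \<and> (\<exists>i. (f (Suc n), f n, i) \<in> E)" by blast
  then obtain l where "\<forall>n. (f (Suc n), f n, l n) \<in> E" by metis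
  then show ?thesis using f unfolding bpath_def by blast
qed

lemma fpath_lab:
  assumes "labeled_graph K E" "complete_graph K E" "v \<in> {1..K}"
  shows "\<exists>f. f 0 = v \<and> fpath E f l"
proof -
  have "\<exists>f. \<forall>n. (f n \<in> {1..K} \<and> (n = 0 \<longrightarrow> f n = v)) \<and> (f n, f (Suc n), l n) \<in> E"
  proof (rule dependent_nat_choice)
    show "\<exists>x. x \<in> {1..K} \<and> (0 = (0::nat) \<longrightarrow> x = v)" using assms by auto
  next
    fix x and n :: nat assume "x \<in> {1..K} \<and> (n = 0 \<longrightarrow> x = v)"
    then obtain t where "(x,t,l n) \<in> E" using assms(2) unfolding complete_graph_def by blast
    moreover then have "t \<in> {1..K}" using assms(1) unfolding labeled_graph_def by blast
    ultimately show "\<exists>y. (y \<in> {1..K} \<and> (Suc n = 0 \<longrightarrow> y = v)) \<and> (x, y, l n) \<in> E" by blast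
  qed
  then show ?thesis unfolding fpath_def by blast
qed

lemma bpath_lab:
  assumes "labeled_graph K E" "co_complete_graph K E" "v \<in> {1..K}"
  shows "\<exists>f. f 0 = v \<and> bpath E f l"
proof -
  have "\<exists>f. \<forall>n. (f n \<in> {1..K} \<and> (n = 0 \<longrightarrow> f n = v)) \<and> (f (Suc n), f n, l n) \<in> E"
  proof (rule dependent_nat_choice)
    show "\<exists>x. x \<in> {1..K} \<and> (0 = (0::nat) \<longrightarrow> x = v)" using assms by auto
  next
    fix x and n :: nat assume "x \<in> {1..K} \<and> (n = 0 \<longrightarrow> x = v)"
    then obtain t where "(t,x,l n) \<in> E" using assms(2) unfolding co_complete_graph_def by blast
    moreover then have "t \<in> {1..K}" using assms(1) unfolding labeled_graph_def by blast
    ultimately show "\<exists>y. (y \<in> {1..K} \<and> (Suc n = 0 \<longrightarrow> y = v)) \<and> (y, x, l n) \<in> E" by blast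
  qed
  then show ?thesis unfolding bpath_def by blast
qed

lemma walk_bpath: "is_walk E s w \<Longrightarrow> bpath E (\<lambda>n. s (- int n)) (past w)"
  unfolding is_walk_def bpath_def past_def
proof (intro allI)
  fix n :: nat assume "\<forall>k. (s k, s (k + 1), w k) \<in> E"
  then have "(s (- int n - 1), s (- int n - 1 + 1), w (- int n - 1)) \<in> E" by blast
  moreover have "- int (Suc n) = - int n - 1" by simp
  moreover have "- int n - 1 + 1 = - int n" by simp
  ultimately show "(s (- int (Suc n)), s (- int n), w (- int n - 1)) \<in> E" by metis
qed
lemma walk_fpath: "is_walk E s w \<Longrightarrow> fpath E (\<lambda>n. s (int n)) (future w)"
  unfolding is_walk_def fpath_def future_def
proof (intro allI)
  fix n :: nat assume "\<forall>k. (s k, s (k + 1), w k) \<in> E"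
  then have "(s (int n), s (int n + 1), w (int n)) \<in> E" by blast
  then show "(s (int n), s (int (Suc n)), w (int n)) \<in> E" by (simp add: add.commute)
qed


lemma pres_lg: "presentation Z K C E \<Longrightarrow> labeled_graph K E"
  unfolding presentation_def by blast
lemma pres_C: "presentation Z K C E \<Longrightarrow> j \<in> {1..K} \<Longrightarrow> C j = Zs E j"
  unfolding presentation_def by blast
lemma edge_nodes: "labeled_graph K E \<Longrightarrow> (a,b,i) \<in> E \<Longrightarrow> a \<in> {1..K} \<and> b \<in> {1..K}"
  unfolding labeled_graph_def by blast

lemma glue_mem:
  assumes "bpath E g lb" "fpath E f lf" "g 0 = v" "f 0 = v"
  shows "glue_z lb lf \<in> Zs E v"
  unfolding Zs_def using glue_walk[OF assms(1,2)] assms(3,4) glue_s0[of g f] by auto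

lemma Zs_b: "z \<in> Zs E v \<Longrightarrow> \<exists>g. g 0 = v \<and> bpath E g (past z)"
proof -
  assume "z \<in> Zs E v"
  then obtain s where "is_walk E s z" "s 0 = v" unfolding Zs_def by blast
  then show ?thesis using walk_bpath[of E s z] by (intro exI[of _ "\<lambda>n. s (- int n)"]) simp
qed
lemma Zs_f: "z \<in> Zs E v \<Longrightarrow> \<exists>g. g 0 = v \<and> fpath E g (future z)"
proof -
  assume "z \<in> Zs E v"
  then obtain s where "is_walk E s z" "s 0 = v" unfolding Zs_def by blast
  then show ?thesis using walk_fpath[of E s z] by (intro exI[of _ "\<lambda>n. s (int n)"]) simp
qed

lemma Post_UNIV: "Post UNIV = UNIV"
proof -
  have "h \<in> Post UNIV" for h :: "nat \<Rightarrow> 'a"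
  proof -
    have "future (\<lambda>k. h (nat k)) = h" by (auto simp: future_def)
    then show ?thesis unfolding Post_def by (metis UNIV_I image_eqI)
  qed
  then show ?thesis by auto
qed
lemma Pre_UNIV: "Pre UNIV = UNIV"
proof -
  have "h \<in> Pre UNIV" for h :: "nat \<Rightarrow> 'a"
  proof -
    have "past (\<lambda>k. h (nat (-k-1))) = h" by (auto simp: past_def)
    then show ?thesis unfolding Pre_def by (metis UNIV_I image_eqI)
  qed
  then show ?thesis by auto
qed

lemma mem_iff: "memory_covering UNIV K C \<longleftrightarrow>
   (\<forall>j\<in>{1..K}. \<forall>z w. w \<in> C j \<longrightarrow> past z = past w \<longrightarrow> z \<in> C j)"
proof -
  have "(A = {z. past z \<in> past ` A}) \<longleftrightarrow> (\<forall>z w. w \<in> A \<longrightarrow> past z = past w \<longrightarrow> z \<in> A)" for A :: "(int \<Rightarrow> 'a) set"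
    by (auto simp: set_eq_iff image_iff)
  then show ?thesis unfolding memory_covering_def concat_seq_def Post_UNIV Pre_def by simp
qed
lemma fut_iff: "future_covering UNIV K C \<longleftrightarrow>
   (\<forall>j\<in>{1..K}. \<forall>z w. w \<in> C j \<longrightarrow> future z = future w \<longrightarrow> z \<in> C j)"
proof -
  have "(A = {z. future z \<in> future ` A}) \<longleftrightarrow> (\<forall>z w. w \<in> A \<longrightarrow> future z = future w \<longrightarrow> z \<in> A)" for A :: "(int \<Rightarrow> 'a) set"
    by (auto simp: set_eq_iff image_iff)
  then show ?thesis unfolding future_covering_def concat_seq_def Pre_UNIV Post_def by simp
qed

lemma A1:
  assumes m: "memory_covering UNIV K C" and p: "presentation UNIV K C E"
  shows "complete_graph K E"
  unfolding complete_graph_def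
proof (intro ballI allI)
  fix v i assume v: "v \<in> {1..K}"
  have lg: "labeled_graph K E" using pres_lg[OF p] .
  obtain g lb where g: "g 0 = v" "bpath E g lb" using bpath_any[OF lg v] by blast
  obtain f lf where f: "f 0 = v" "fpath E f lf" using fpath_any[OF lg v] by blast
  have w: "glue_z lb lf \<in> C v" using glue_mem[OF g(2) f(2) g(1) f(1)] pres_C[OF p v] by simp
  have "glue_z lb (lf(0:=i)) \<in> C v"
    by (rule mem_iff[THEN iffD1, OF m, rule_format, OF v w]) simp
  then obtain s where "is_walk E s (glue_z lb (lf(0:=i)))" "s 0 = v"
    using pres_C[OF p v] unfolding Zs_def by blast
  then have "(s 0, s (0+1), glue_z lb (lf(0:=i)) 0) \<in> E" unfolding is_walk_def by blast
  then show "\<exists>t. (v, t, i) \<in> E" using \<open>s 0 = v\<close> by (auto simp: glue_z_def)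
qed

lemma C1:
  assumes m: "future_covering UNIV K C" and p: "presentation UNIV K C E"
  shows "co_complete_graph K E"
  unfolding co_complete_graph_def
proof (intro ballI allI)
  fix v i assume v: "v \<in> {1..K}"
  have lg: "labeled_graph K E" using pres_lg[OF p] .
  obtain g lb where g: "g 0 = v" "bpath E g lb" using bpath_any[OF lg v] by blast
  obtain f lf where f: "f 0 = v" "fpath E f lf" using fpath_any[OF lg v] by blast
  have w: "glue_z lb lf \<in> C v" using glue_mem[OF g(2) f(2) g(1) f(1)] pres_C[OF p v] by simp
  have "glue_z (lb(0:=i)) lf \<in> C v"
    by (rule fut_iff[THEN iffD1, OF m, rule_format, OF v w]) simp
  then obtain s where "is_walk E s (glue_z (lb(0:=i)) lf)" "s 0 = v"
    using pres_C[OF p v] unfolding Zs_def by blast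
  then have "(s (-1), s (-1+1), glue_z (lb(0:=i)) lf (-1)) \<in> E" unfolding is_walk_def by blast
  then show "\<exists>t. (t, v, i) \<in> E" using \<open>s 0 = v\<close> by (auto simp: glue_z_def)
qed

lemma A2:
  assumes p: "presentation UNIV K C E" and c: "complete_graph K E"
  shows "memory_covering UNIV K C"
  unfolding mem_iff
proof (intro ballI allI impI)
  fix j z w assume j: "j \<in> {1..K}" and w: "w \<in> C j" and e: "past z = past w"
  have lg: "labeled_graph K E" using pres_lg[OF p] .
  obtain g where g: "g 0 = j" "bpath E g (past w)" using Zs_b[of w E j] w pres_C[OF p j] by auto
  obtain f where f: "f 0 = j" "fpath E f (future z)" using fpath_lab[OF lg c j] by blast
  have "glue_z (past w) (future z) \<in> Zs E j" using glue_mem[OF g(2) f(2) g(1) f(1)] .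
  then show "z \<in> C j" using e glue_pf[of z] pres_C[OF p j] by simp
qed

lemma C2:
  assumes p: "presentation UNIV K C E" and c: "co_complete_graph K E"
  shows "future_covering UNIV K C"
  unfolding fut_iff
proof (intro ballI allI impI)
  fix j z w assume j: "j \<in> {1..K}" and w: "w \<in> C j" and e: "future z = future w"
  have lg: "labeled_graph K E" using pres_lg[OF p] .
  obtain f where f: "f 0 = j" "fpath E f (future w)" using Zs_f[of w E j] w pres_C[OF p j] by auto
  obtain g where g: "g 0 = j" "bpath E g (past z)" using bpath_lab[OF lg c j] by blast
  have "glue_z (past z) (future w) \<in> Zs E j" using glue_mem[OF g(2) f(2) g(1) f(1)] .
  then show "z \<in> C j" using e glue_pf[of z] pres_C[OF p j] by simp
qed

lemma B:
  assumes m: "memory_covering UNIV K C" and nr: "non_redundant K C"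
    and p: "presentation UNIV K C E"
  shows "deterministic_graph K E"
  unfolding deterministic_graph_def
proof (intro ballI allI impI)
  fix v i t t' assume v: "v \<in> {1..K}" and e1: "(v, t, i) \<in> E" and e2: "(v, t', i) \<in> E"
  have lg: "labeled_graph K E" using pres_lg[OF p] .
  have t: "t \<in> {1..K}" and t': "t' \<in> {1..K}" using edge_nodes[OF lg e1] edge_nodes[OF lg e2] by auto
  obtain g lb where g: "g 0 = v" "bpath E g lb" using bpath_any[OF lg v] by blast
  obtain f lf where f: "f 0 = t" "fpath E f lf" using fpath_any[OF lg t] by blast
  obtain f' lf' where f': "f' 0 = t'" "fpath E f' lf'" using fpath_any[OF lg t'] by blast
  have b1: "bpath E (case_nat t g) (case_nat i lb)" using g e1 unfolding bpath_def
    by (simp split: nat.split)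
  have b2: "bpath E (case_nat t' g) (case_nat i lb)" using g e2 unfolding bpath_def
    by (simp split: nat.split)
  have z1: "glue_z (case_nat i lb) lf \<in> C t"
    using glue_mem[OF b1 f(2) _ f(1)] pres_C[OF p t] by simp
  have z2: "glue_z (case_nat i lb) lf' \<in> C t'"
    using glue_mem[OF b2 f'(2) _ f'(1)] pres_C[OF p t'] by simp
  have "glue_z (case_nat i lb) lf' \<in> C t"
    by (rule mem_iff[THEN iffD1, OF m, rule_format, OF t z1]) simp
  then show "t = t'" using z2 nr t t' unfolding non_redundant_def by blast
qed

lemma D:
  assumes m: "future_covering UNIV K C" and nr: "non_redundant K C"
    and p: "presentation UNIV K C E"
  shows "co_deterministic_graph K E"
  unfolding co_deterministic_graph_def
proof (intro ballI allI impI)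
  fix v i t t' assume v: "v \<in> {1..K}" and e1: "(t, v, i) \<in> E" and e2: "(t', v, i) \<in> E"
  have lg: "labeled_graph K E" using pres_lg[OF p] .
  have t: "t \<in> {1..K}" and t': "t' \<in> {1..K}" using edge_nodes[OF lg e1] edge_nodes[OF lg e2] by auto
  obtain f lf where f: "f 0 = v" "fpath E f lf" using fpath_any[OF lg v] by blast
  obtain g lb where g: "g 0 = t" "bpath E g lb" using bpath_any[OF lg t] by blast
  obtain g' lb' where g': "g' 0 = t'" "bpath E g' lb'" using bpath_any[OF lg t'] by blast
  have b1: "fpath E (case_nat t f) (case_nat i lf)" using f e1 unfolding fpath_def
    by (simp split: nat.split)
  have b2: "fpath E (case_nat t' f) (case_nat i lf)" using f e2 unfolding fpath_def
    by (simp split: nat.split)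
  have z1: "glue_z lb (case_nat i lf) \<in> C t"
    using glue_mem[OF g(2) b1 g(1)] pres_C[OF p t] by simp
  have z2: "glue_z lb' (case_nat i lf) \<in> C t'"
    using glue_mem[OF g'(2) b2 g'(1)] pres_C[OF p t'] by simp
  have "glue_z lb' (case_nat i lf) \<in> C t"
    by (rule fut_iff[THEN iffD1, OF m, rule_format, OF t z1]) simp
  then show "t = t'" using z2 nr t t' unfolding non_redundant_def by blast
qed

theorem mainTheorem8:
  fixes K :: nat and C :: "nat \<Rightarrow> (int \<Rightarrow> 'a::finite) set"
  assumes "graph_induced_covering UNIV K C"
  shows "(memory_covering UNIV K C \<longleftrightarrow>
            (\<forall>E. presentation UNIV K C E \<longrightarrow> complete_graph K E))
       \<and> (memory_covering UNIV K C \<and> non_redundant K C \<longrightarrow>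
            (\<forall>E. presentation UNIV K C E \<longrightarrow> complete_graph K E \<and> deterministic_graph K E))
       \<and> (future_covering UNIV K C \<longleftrightarrow>
            (\<forall>E. presentation UNIV K C E \<longrightarrow> co_complete_graph K E))
       \<and> (future_covering UNIV K C \<and> non_redundant K C \<longrightarrow>
            (\<forall>E. presentation UNIV K C E \<longrightarrow> co_complete_graph K E \<and> co_deterministic_graph K E))"
proof -
  obtain E0 where E0: "presentation UNIV K C E0" using assms unfolding graph_induced_covering_def by blast
  have a: "memory_covering UNIV K C \<longleftrightarrow> (\<forall>E. presentation UNIV K C E \<longrightarrow> complete_graph K E)"
  proof
    assume "memory_covering UNIV K C" then show "\<forall>E. presentation UNIV K C E \<longrightarrow> complete_graph K E"
      using A1[of K C] by simp
  next
    assume "\<forall>E. presentation UNIV K C E \<longrightarrow> complete_graph K E"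
    then have "complete_graph K E0" using E0 by blast
    then show "memory_covering UNIV K C" by (rule A2[OF E0])
  qed
  have c: "future_covering UNIV K C \<longleftrightarrow> (\<forall>E. presentation UNIV K C E \<longrightarrow> co_complete_graph K E)"
  proof
    assume "future_covering UNIV K C" then show "\<forall>E. presentation UNIV K C E \<longrightarrow> co_complete_graph K E"
      using C1[of K C] by simp
  next
    assume "\<forall>E. presentation UNIV K C E \<longrightarrow> co_complete_graph K E"
    then have "co_complete_graph K E0" using E0 by blast
    then show "future_covering UNIV K C" by (rule C2[OF E0])
  qed
  have b: "memory_covering UNIV K C \<and> non_redundant K C \<longrightarrow>
            (\<forall>E. presentation UNIV K C E \<longrightarrow> complete_graph K E \<and> deterministic_graph K E)"
    using A1[of K C] B[of K C] by simp
  have d: "future_covering UNIV K C \<and> non_redundant K C \<longrightarrow>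
            (\<forall>E. presentation UNIV K C E \<longrightarrow> co_complete_graph K E \<and> co_deterministic_graph K E)"
    using C1[of K C] D[of K C] by simp
  from a b c d show ?thesis by (intro conjI)
qed

end
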